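(* For every constant $c$ there exist $n$ and a node $\Gamma_n$ of covtree with $k=|\Gamma_n|$ such that $\Gamma_n$ has no witness of size at most $n+k+c$.
   Context: Posets are finite; an unlabelled poset is an isomorphism class. A downset of $Q$ is a subset closed downward. $D_n(Q)$ denotes the set of downsets of $Q$ of size $n$ up to isomorphism. For a set $\Gamma_n$ of distinct unlabelled posets each of size $n$, a poset $Q$ is a witness of $\Gamma_n$ if $D_n(Q)=\Gamma_n$. A node of covtree (at level $n$) is a set $\Gamma_n$ of unlabelled posets of size $n$ that has at least one witness. *)

theory Defs
  imports Complex_Main
begin

text \<open>A (labelled) finite poset, represented on natural-number labels:
  a carrier set together with its order relation (as a set of pairs).
  Every finite poset is isomorphic to one of this form.\<close>
type_synonym lposet = "nat set \<times> (nat \<times> nat) set"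

definition is_poset :: "lposet \<Rightarrow> bool" where
  "is_poset P \<longleftrightarrow> finite (fst P) \<and> snd P \<subseteq> fst P \<times> fst P
     \<and> (\<forall>x\<in>fst P. (x, x) \<in> snd P) \<and> antisym (snd P) \<and> trans (snd P)"

definition poset_iso :: "lposet \<Rightarrow> lposet \<Rightarrow> bool" where
  "poset_iso P Q \<longleftrightarrow> (\<exists>f. bij_betw f (fst P) (fst Q) \<and>
     (\<forall>x\<in>fst P. \<forall>y\<in>fst P. (x, y) \<in> snd P \<longleftrightarrow> (f x, f y) \<in> snd Q))"

text \<open>An unlabelled poset = isomorphism class of a poset.\<close>
definition iso_class :: "lposet \<Rightarrow> lposet set" where
  "iso_class P = {P'. is_poset P' \<and> poset_iso P' P}"

definition unlabelled_poset_of_size :: "nat \<Rightarrow> lposet set \<Rightarrow> bool" where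
  "unlabelled_poset_of_size n X \<longleftrightarrow> (\<exists>P. is_poset P \<and> card (fst P) = n \<and> X = iso_class P)"

definition is_downset :: "lposet \<Rightarrow> nat set \<Rightarrow> bool" where
  "is_downset Q S \<longleftrightarrow> S \<subseteq> fst Q \<and> (\<forall>y\<in>S. \<forall>x\<in>fst Q. (x, y) \<in> snd Q \<longrightarrow> x \<in> S)"

definition restrict_poset :: "lposet \<Rightarrow> nat set \<Rightarrow> lposet" where
  "restrict_poset Q S = (S, snd Q \<inter> (S \<times> S))"

definition Dn :: "nat \<Rightarrow> lposet \<Rightarrow> lposet set set" where
  "Dn n Q = {iso_class (restrict_poset Q S) | S. is_downset Q S \<and> card S = n}"

definition is_witness :: "nat \<Rightarrow> lposet set set \<Rightarrow> lposet \<Rightarrow> bool" where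
  "is_witness n \<Gamma> Q \<longleftrightarrow> is_poset Q \<and> Dn n Q = \<Gamma>"

definition covtree_node :: "nat \<Rightarrow> lposet set set \<Rightarrow> bool" where
  "covtree_node n \<Gamma> \<longleftrightarrow> (\<forall>X\<in>\<Gamma>. unlabelled_poset_of_size n X) \<and> (\<exists>Q. is_witness n \<Gamma> Q)"

end

theory Submission
  imports Defs
begin

lemma restrict_fst[simp]: "fst (restrict_poset Q S) = S"
  and restrict_snd[simp]: "snd (restrict_poset Q S) = snd Q \<inter> (S \<times> S)"
  by (simp_all add: restrict_poset_def)

lemma is_poset_restrict:
  assumes "is_poset Q" "S \<subseteq> fst Q"
  shows "is_poset (restrict_poset Q S)"
proof -
  have "finite S" using assms unfolding is_poset_def using finite_subset by blast
  then show ?thesis using assms unfolding is_poset_def antisym_def trans_def by auto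
qed

lemma poset_iso_refl: "poset_iso P P"
  unfolding poset_iso_def by (rule exI[of _ id]) auto

lemma poset_iso_sym:
  assumes "poset_iso P Q" shows "poset_iso Q P"
proof -
  obtain f where f: "bij_betw f (fst P) (fst Q)"
    "\<forall>x\<in>fst P. \<forall>y\<in>fst P. (x, y) \<in> snd P \<longleftrightarrow> (f x, f y) \<in> snd Q"
    using assms unfolding poset_iso_def by blast
  let ?g = "inv_into (fst P) f"
  have g: "bij_betw ?g (fst Q) (fst P)" using f(1) by (rule bij_betw_inv_into)
  have "\<forall>x\<in>fst Q. \<forall>y\<in>fst Q. (x, y) \<in> snd Q \<longleftrightarrow> (?g x, ?g y) \<in> snd P"
  proof (intro ballI)
    fix x y assume xy: "x \<in> fst Q" "y \<in> fst Q"
    have gx: "?g x \<in> fst P" "f (?g x) = x" using xy f(1)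
      by (auto simp: bij_betw_def inv_into_into f_inv_into_f)
    have gy: "?g y \<in> fst P" "f (?g y) = y" using xy f(1)
      by (auto simp: bij_betw_def inv_into_into f_inv_into_f)
    show "(x, y) \<in> snd Q \<longleftrightarrow> (?g x, ?g y) \<in> snd P"
      using f(2) gx gy by metis
  qed
  then show ?thesis using g unfolding poset_iso_def by blast
qed

lemma poset_iso_trans:
  assumes "poset_iso P Q" "poset_iso Q R" shows "poset_iso P R"
proof -
  obtain f where f: "bij_betw f (fst P) (fst Q)"
    "\<forall>x\<in>fst P. \<forall>y\<in>fst P. (x, y) \<in> snd P \<longleftrightarrow> (f x, f y) \<in> snd Q"
    using assms unfolding poset_iso_def by blast
  obtain g where g: "bij_betw g (fst Q) (fst R)"
    "\<forall>x\<in>fst Q. \<forall>y\<in>fst Q. (x, y) \<in> snd Q \<longleftrightarrow> (g x, g y) \<in> snd R"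
    using assms unfolding poset_iso_def by blast
  have "bij_betw (g \<circ> f) (fst P) (fst R)" using f(1) g(1) by (rule bij_betw_trans)
  moreover have "\<forall>x\<in>fst P. \<forall>y\<in>fst P. (x, y) \<in> snd P \<longleftrightarrow> ((g\<circ>f) x, (g\<circ>f) y) \<in> snd R"
  proof (intro ballI)
    fix x y assume xy: "x \<in> fst P" "y \<in> fst P"
    have "f x \<in> fst Q" "f y \<in> fst Q" using xy f(1) by (auto dest: bij_betwE)
    then show "(x, y) \<in> snd P \<longleftrightarrow> ((g\<circ>f) x, (g\<circ>f) y) \<in> snd R"
      using f(2) g(2) xy by simp
  qed
  ultimately show ?thesis unfolding poset_iso_def by blast
qed

lemma iso_class_eq: "poset_iso A B \<Longrightarrow> iso_class A = iso_class B"
  unfolding iso_class_def using poset_iso_trans poset_iso_sym by blast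

lemma iso_class_iso: "is_poset A \<Longrightarrow> iso_class A = iso_class B \<Longrightarrow> poset_iso A B"
proof -
  assume "is_poset A" "iso_class A = iso_class B"
  then have "A \<in> iso_class B" unfolding iso_class_def using poset_iso_refl
    by (metis (mono_tags, lifting) iso_class_def mem_Collect_eq)
  then show ?thesis unfolding iso_class_def by simp
qed

lemma map_iso:
  assumes "inj_on f S" "\<forall>p\<in>S. \<forall>q\<in>S. (p,q) \<in> snd Q \<longleftrightarrow> (f p, f q) \<in> snd Q"
  shows "iso_class (restrict_poset Q S) = iso_class (restrict_poset Q (f ` S))"
proof (rule iso_class_eq)
  have "bij_betw f S (f ` S)" using assms(1) by (simp add: bij_betw_def)
  then show "poset_iso (restrict_poset Q S) (restrict_poset Q (f ` S))"
    unfolding poset_iso_def using assms(2) by auto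
qed

lemma realize:
  assumes "is_poset P" "Dn n Q = Dn n P" "is_downset P T" "card T = n"
  shows "\<exists>S g. is_downset Q S \<and> card S = n \<and> bij_betw g T S \<and>
           (\<forall>p\<in>T. \<forall>q\<in>T. (p,q) \<in> snd P \<longleftrightarrow> (g p, g q) \<in> snd Q)"
proof -
  have "iso_class (restrict_poset P T) \<in> Dn n P" unfolding Dn_def using assms by blast
  then have "iso_class (restrict_poset P T) \<in> Dn n Q" using assms(2) by simp
  then obtain S where S: "iso_class (restrict_poset P T) = iso_class (restrict_poset Q S)"
    "is_downset Q S" "card S = n"
    unfolding Dn_def by auto
  have "is_poset (restrict_poset P T)"
    using assms(1,3) is_poset_restrict unfolding is_downset_def by blast
  then have "poset_iso (restrict_poset P T) (restrict_poset Q S)" using S(1) iso_class_iso by blast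
  then obtain g where g: "bij_betw g T S"
    "\<forall>x\<in>T. \<forall>y\<in>T. (x, y) \<in> snd P \<inter> T \<times> T \<longleftrightarrow> (g x, g y) \<in> snd Q \<inter> S \<times> S"
    unfolding poset_iso_def by auto
  have "\<forall>p\<in>T. \<forall>q\<in>T. (p,q) \<in> snd P \<longleftrightarrow> (g p, g q) \<in> snd Q"
    using g by (auto simp: bij_betw_def)
  then show ?thesis using S g by blast
qed

definition R0 :: "nat \<Rightarrow> (nat \<times> nat) set" where
  "R0 N = {(p,q). p < 2*N \<and> q < 2*N \<and> p \<le> q \<and> (p < N \<longleftrightarrow> q < N) \<and> \<not>(p = 2*N-2 \<and> q = 2*N-1)}"

definition Q0 :: "nat \<Rightarrow> lposet" where "Q0 N = ({..<2*N}, R0 N)"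

lemma R0_iff: "(p,q) \<in> R0 N \<longleftrightarrow> p < 2*N \<and> q < 2*N \<and> p \<le> q \<and> (p < N \<longleftrightarrow> q < N) \<and> \<not>(p = 2*N-2 \<and> q = 2*N-1)"
  by (simp add: R0_def)

lemma Q0_simps[simp]: "fst (Q0 N) = {..<2*N}" "snd (Q0 N) = R0 N"
  by (simp_all add: Q0_def)

lemma is_poset_Q0: assumes "N \<ge> 2" shows "is_poset (Q0 N)"
  unfolding is_poset_def antisym_def trans_def using assms
  by (auto simp: R0_iff)

lemma downclosed_interval:
  fixes B :: "nat set"
  assumes "finite B" "B \<subseteq> {N..}" "\<forall>i\<in>B. \<forall>j. N \<le> j \<longrightarrow> j \<le> i \<longrightarrow> j \<in> B"
  shows "B = {N..<N + card B}"
proof (cases "B = {}")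
  case True then show ?thesis by simp
next
  case False
  let ?M = "Max B"
  have M: "?M \<in> B" using False assms(1) by simp
  have MN: "N \<le> ?M" using M assms(2) by auto
  have "B = {N..?M}"
  proof
    show "B \<subseteq> {N..?M}" using assms(1,2) by auto
    show "{N..?M} \<subseteq> B" using assms(3) M by auto
  qed
  moreover have "card {N..?M} = Suc ?M - N" by simp
  ultimately show ?thesis using MN by (metis Suc_diff_le add_Suc_right atLeastLessThanSuc_atLeastAtMost le_add_diff_inverse)
qed

definition PP :: "nat \<Rightarrow> nat \<Rightarrow> nat set" where
  "PP N a = {..<a} \<union> {N..<2*N+1-a}"

definition tau :: "nat \<Rightarrow> nat \<Rightarrow> nat" where
  "tau N p = (if p = 2*N-2 then 2*N-1 else if p = 2*N-1 then 2*N-2 else p)"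

definition sig :: "nat \<Rightarrow> nat \<Rightarrow> nat" where
  "sig N p = (if p < N then p + N else p - N)"

lemma tau_tau: "N \<ge> 2 \<Longrightarrow> tau N (tau N p) = p"
  unfolding tau_def by auto

lemma invol_image: "(\<And>x. f (f x) = x) \<Longrightarrow> x \<in> f ` A \<longleftrightarrow> f x \<in> A"
  by (metis image_iff)

lemma tau_image: assumes "N \<ge> 3"
  shows "tau N ` PP N 2 = {0,1} \<union> {N..<2*N-2} \<union> {2*N-1}"
proof -
  have inv: "\<And>x. tau N (tau N x) = x" using tau_tau[of N] assms by simp
  show ?thesis
  proof (rule set_eqI)
    fix x
    have "x \<in> tau N ` PP N 2 \<longleftrightarrow> tau N x \<in> PP N 2" using invol_image[OF inv] .
    also have "\<dots> \<longleftrightarrow> x \<in> {0,1} \<union> {N..<2*N-2} \<union> {2*N-1}"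
      using assms unfolding PP_def tau_def by auto
    finally show "x \<in> tau N ` PP N 2 \<longleftrightarrow> x \<in> {0,1} \<union> {N..<2*N-2} \<union> {2*N-1}" .
  qed
qed

lemma tau_iso: assumes "N \<ge> 3"
  shows "iso_class (restrict_poset (Q0 N) (PP N 2)) = iso_class (restrict_poset (Q0 N) (tau N ` PP N 2))"
proof (rule map_iso)
  show "inj_on (tau N) (PP N 2)" by (rule inj_on_inverseI[where g="tau N"]) (use assms tau_tau[of N] in simp)
  show "\<forall>p\<in>PP N 2. \<forall>q\<in>PP N 2. ((p, q) \<in> snd (Q0 N)) = ((tau N p, tau N q) \<in> snd (Q0 N))"
    using assms unfolding PP_def tau_def by (auto simp: R0_iff)
qed

lemma sig_image: assumes "N \<ge> 3" "2 \<le> a" "a \<le> N - 1"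
  shows "sig N ` PP N a = PP N (N + 1 - a)"
proof
  show "sig N ` PP N a \<subseteq> PP N (N + 1 - a)" using assms unfolding PP_def sig_def by auto
  show "PP N (N + 1 - a) \<subseteq> sig N ` PP N a"
  proof
    fix q assume q: "q \<in> PP N (N + 1 - a)"
    have "sig N (sig N q) = q" "sig N q \<in> PP N a" using q assms unfolding PP_def sig_def by auto
    then show "q \<in> sig N ` PP N a" by (metis image_eqI)
  qed
qed

lemma sig_iso: assumes "N \<ge> 3" "2 \<le> a" "a \<le> N - 1"
  shows "iso_class (restrict_poset (Q0 N) (PP N a)) = iso_class (restrict_poset (Q0 N) (sig N ` PP N a))"
proof (rule map_iso)
  show "inj_on (sig N) (PP N a)" using assms unfolding inj_on_def PP_def sig_def by auto
  show "\<forall>p\<in>PP N a. \<forall>q\<in>PP N a. ((p, q) \<in> snd (Q0 N)) = ((sig N p, sig N q) \<in> snd (Q0 N))"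
  proof (intro ballI)
    fix p q assume pq: "p \<in> PP N a" "q \<in> PP N a"
    have b: "p < 2*N - 1" "q < 2*N-1" "sig N p < 2*N-1" "sig N q < 2*N-1"
      using pq assms unfolding PP_def sig_def by auto
    have "(p, q) \<in> R0 N \<longleftrightarrow> p \<le> q \<and> (p < N \<longleftrightarrow> q < N)"
      using b by (auto simp: R0_iff)
    moreover have "(sig N p, sig N q) \<in> R0 N \<longleftrightarrow> sig N p \<le> sig N q \<and> (sig N p < N \<longleftrightarrow> sig N q < N)"
      using b by (auto simp: R0_iff)
    moreover have "p \<le> q \<and> (p < N \<longleftrightarrow> q < N) \<longleftrightarrow> sig N p \<le> sig N q \<and> (sig N p < N \<longleftrightarrow> sig N q < N)"
      using b unfolding sig_def by auto
    ultimately show "((p, q) \<in> snd (Q0 N)) = ((sig N p, sig N q) \<in> snd (Q0 N))" by simp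
  qed
qed

lemma classify:
  assumes N3: "N \<ge> 3" and S: "is_downset (Q0 N) S" "card S = N+1"
  shows "S = {..<N+1} \<or> S = insert 0 {N..<2*N} \<or> (\<exists>a. 2 \<le> a \<and> a \<le> N-1 \<and> S = PP N a)
         \<or> S = tau N ` PP N 2"
proof -
  have Ssub: "S \<subseteq> {..<2*N}" using S(1) unfolding is_downset_def by simp
  have cl: "\<And>p q. q \<in> S \<Longrightarrow> (p,q) \<in> R0 N \<Longrightarrow> p \<in> S"
    using S(1) unfolding is_downset_def by (auto simp: R0_iff)
  have finS: "finite S" using Ssub finite_subset by blast
  define A where "A = S \<inter> {..<N}"
  define B where "B = S \<inter> {N..}"
  have SAB: "S = A \<union> B" unfolding A_def B_def by auto
  have disj: "A \<inter> B = {}" unfolding A_def B_def by auto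
  have finA: "finite A" "finite B" using finS unfolding A_def B_def by auto
  have cardS: "card A + card B = N + 1" using S(2) SAB disj finA by (simp add: card_Un_disjoint)
  have Aeq: "A = {0..<0 + card A}"
  proof (rule downclosed_interval)
    show "finite A" by fact
    show "A \<subseteq> {0..}" by auto
    show "\<forall>i\<in>A. \<forall>j. 0 \<le> j \<longrightarrow> j \<le> i \<longrightarrow> j \<in> A"
    proof (intro ballI allI impI)
      fix i j assume "i \<in> A" "0 \<le> j" "j \<le> i"
      then have "(j, i) \<in> R0 N" "i \<in> S" "j < N" using N3 unfolding A_def by (auto simp: R0_iff)
      then show "j \<in> A" using cl unfolding A_def by auto
    qed
  qed
  define a where "a = card A"
  define b where "b = card B"
  have Aeq': "A = {..<a}" unfolding a_def by (metis Aeq add_0 atLeast0LessThan)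
  have cA: "card A \<le> N" unfolding A_def
    by (metis card_lessThan card_mono finite_lessThan inf_le2)
  show ?thesis
  proof (cases "2*N-1 \<in> S")
    case False
    have Beq0: "B = {N..<N + card B}"
    proof (rule downclosed_interval)
      show "finite B" by fact
      show "B \<subseteq> {N..}" unfolding B_def by auto
      show "\<forall>i\<in>B. \<forall>j. N \<le> j \<longrightarrow> j \<le> i \<longrightarrow> j \<in> B"
      proof (intro ballI allI impI)
        fix i j assume "i \<in> B" "N \<le> j" "j \<le> i"
        moreover have iS: "i \<in> S" using \<open>i \<in> B\<close> unfolding B_def by simp
        moreover have "i < 2*N" "i \<noteq> 2*N-1" using iS Ssub False by auto
        ultimately have "(j, i) \<in> R0 N" unfolding R0_iff by simp
        then have "j \<in> S" using cl iS by blast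
        then show "j \<in> B" using \<open>N \<le> j\<close> unfolding B_def by simp
      qed
    qed
    then have Beq: "B = {N..<N + b}" unfolding b_def .
    have "B \<subseteq> {N..<2*N-1}"
    proof
      fix x assume "x \<in> B"
      then have "x \<in> S" "x < 2*N" "N \<le> x" using Ssub unfolding B_def by auto
      moreover have "x \<noteq> 2*N-1" using False \<open>x \<in> S\<close> by auto
      ultimately show "x \<in> {N..<2*N-1}" by simp
    qed
    then have "card B \<le> card {N..<2*N-1}" by (intro card_mono) simp_all
    then have cB: "card B \<le> N - 1" by simp
    show ?thesis
    proof (cases "card A = N")
      case True
      then have "b = 1" "a = N" using cardS unfolding a_def b_def by simp_all
      then have "S = {..<N+1}" using SAB Aeq' Beq by auto
      then show ?thesis by simp
    next
      case False
      then have a: "2 \<le> a" "a \<le> N - 1" using cA cB cardS unfolding a_def by auto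
      have "N + b = 2*N+1-a" using cardS unfolding a_def b_def by simp
      then have "S = PP N a" unfolding PP_def using SAB Aeq' Beq by simp
      then show ?thesis using a by blast
    qed
  next
    case True
    have low: "{N..<2*N-2} \<subseteq> S"
    proof
      fix j assume "j \<in> {N..<2*N-2}"
      then have "(j, 2*N-1) \<in> R0 N" using N3 by (auto simp: R0_iff)
      then show "j \<in> S" using cl True by blast
    qed
    show ?thesis
    proof (cases "2*N-2 \<in> S")
      case True2: True
      have "B = {N..<2*N}"
      proof
        show "B \<subseteq> {N..<2*N}" using Ssub unfolding B_def by auto
        show "{N..<2*N} \<subseteq> B"
        proof
          fix x assume x: "x \<in> {N..<2*N}"
          then have "x \<in> {N..<2*N-2} \<or> x = 2*N-2 \<or> x = 2*N-1" by auto
          then show "x \<in> B" using low True True2 x unfolding B_def by auto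
        qed
      qed
      then have "card B = N" by simp
      then have "card A = 1" using cardS by simp
      then have "A = {0}" using Aeq' unfolding a_def by auto
      then have "S = insert 0 {N..<2*N}" using SAB \<open>B = {N..<2*N}\<close> by auto
      then show ?thesis by simp
    next
      case False2: False
      have Beq2: "B = {N..<2*N-2} \<union> {2*N-1}"
      proof
        show "B \<subseteq> {N..<2*N-2} \<union> {2*N-1}"
        proof
          fix x assume "x \<in> B"
          then have "x \<in> S" "N \<le> x" "x < 2*N" using Ssub unfolding B_def by auto
          then show "x \<in> {N..<2*N-2} \<union> {2*N-1}" using False2
            by (cases "x = 2*N-2") auto
        qed
        show "{N..<2*N-2} \<union> {2*N-1} \<subseteq> B" using low True N3 unfolding B_def by auto
      qed
      moreover have "card ({N..<2*N-2} \<union> {2*N-1}) = N - 1"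
      proof -
        have "card ({N..<2*N-2} \<union> {2*N-1}) = card (insert (2*N-1) {N..<2*N-2})" by simp
        also have "\<dots> = Suc (card {N..<2*N-2})" by (subst card_insert_disjoint) auto
        also have "\<dots> = N - 1" using N3 by simp
        finally show ?thesis .
      qed
      ultimately have "card B = N - 1" by simp
      then have "card A = 2" using cardS N3 by simp
      then have "A = {0,1}" using Aeq' unfolding a_def by auto
      then have "S = {0,1} \<union> {N..<2*N-2} \<union> {2*N-1}" using SAB Beq2 by auto
      then show ?thesis using tau_image[OF N3] by simp
    qed
  qed
qed

lemma card_Dn:
  assumes N3: "N \<ge> 3"
  shows "card (Dn (N+1) (Q0 N)) \<le> (N+1) div 2 + 1"
proof -
  define I where "I = {2..(N+1) div 2}"
  define Rep where "Rep = {{..<N+1}, insert 0 {N..<2*N}} \<union> PP N ` I"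
  let ?f = "\<lambda>S. iso_class (restrict_poset (Q0 N) S)"
  have sub: "Dn (N+1) (Q0 N) \<subseteq> ?f ` Rep"
  proof
    fix X assume "X \<in> Dn (N+1) (Q0 N)"
    then obtain S where S: "X = ?f S" "is_downset (Q0 N) S" "card S = N+1"
      unfolding Dn_def by auto
    have "S = {..<N+1} \<or> S = insert 0 {N..<2*N} \<or> (\<exists>a. 2 \<le> a \<and> a \<le> N-1 \<and> S = PP N a)
         \<or> S = tau N ` PP N 2" using classify[OF N3 S(2,3)] .
    then show "X \<in> ?f ` Rep"
    proof (elim disjE exE conjE)
      assume "S = {..<N+1}" then show ?thesis using S(1) unfolding Rep_def by blast
    next
      assume "S = insert 0 {N..<2*N}" then show ?thesis using S(1) unfolding Rep_def by blast
    next
      fix a assume a: "2 \<le> a" "a \<le> N - 1" "S = PP N a"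
      show ?thesis
      proof (cases "a \<le> (N+1) div 2")
        case True
        then have "S \<in> Rep" using a unfolding Rep_def I_def by auto
        then show ?thesis using S(1) by blast
      next
        case False
        have "X = ?f (sig N ` PP N a)" using S(1) a sig_iso[OF N3 a(1,2)] by simp
        also have "\<dots> = ?f (PP N (N + 1 - a))" using sig_image[OF N3 a(1,2)] by simp
        finally have "X = ?f (PP N (N + 1 - a))" .
        moreover have "N + 1 - a \<in> I" using False a unfolding I_def by auto
        ultimately show ?thesis unfolding Rep_def by blast
      qed
    next
      assume "S = tau N ` PP N 2"
      then have "X = ?f (PP N 2)" using S(1) tau_iso[OF N3] by simp
      moreover have "2 \<in> I" using N3 unfolding I_def by auto
      ultimately show ?thesis unfolding Rep_def by blast
    qed
  qed
  have finRep: "finite Rep" unfolding Rep_def I_def by simp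
  have "card (Dn (N+1) (Q0 N)) \<le> card (?f ` Rep)"
    using sub finRep by (intro card_mono) simp_all
  also have "\<dots> \<le> card Rep" by (rule card_image_le[OF finRep])
  also have "\<dots> \<le> card {{..<N+1}, insert 0 {N..<2*N}} + card (PP N ` I)"
    unfolding Rep_def by (rule card_Un_le)
  also have "\<dots> \<le> 2 + card I"
    using card_image_le[of I "PP N"] card_insert_le_m1 unfolding I_def
    by (simp add: card_insert_if) 
  also have "\<dots> = (N+1) div 2 + 1" unfolding I_def using N3 by simp
  finally show ?thesis .
qed

lemma lower:
  assumes N3: "N \<ge> 3" and Q: "is_poset Q" and eq: "Dn (N+1) Q = Dn (N+1) (Q0 N)"
  shows "2*N \<le> card (fst Q)"
proof -
  have P0: "is_poset (Q0 N)" using is_poset_Q0 N3 by simp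
  have finQ: "finite (fst Q)" and subQ: "snd Q \<subseteq> fst Q \<times> fst Q"
    and reflQ: "\<And>x. x \<in> fst Q \<Longrightarrow> (x,x) \<in> snd Q"
    and antiQ: "\<And>x y. (x,y) \<in> snd Q \<Longrightarrow> (y,x) \<in> snd Q \<Longrightarrow> x = y"
    and transQ: "\<And>x y z. (x,y) \<in> snd Q \<Longrightarrow> (y,z) \<in> snd Q \<Longrightarrow> (x,z) \<in> snd Q"
    using Q unfolding is_poset_def antisym_def trans_def by blast+
  define D1 where "D1 = {..<N+1}"
  have D1d: "is_downset (Q0 N) D1" unfolding is_downset_def D1_def using N3 by (auto simp: R0_iff)
  have D1c: "card D1 = N+1" unfolding D1_def by simp
  obtain S1 g where S1: "is_downset Q S1" "card S1 = N+1" "bij_betw g D1 S1"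
    and g: "\<forall>p\<in>D1. \<forall>q\<in>D1. (p,q) \<in> R0 N \<longleftrightarrow> (g p, g q) \<in> snd Q"
    using realize[OF P0 eq D1d D1c] by auto
  define D2 where "D2 = insert 0 {N..<2*N}"
  have D2d: "is_downset (Q0 N) D2" unfolding is_downset_def D2_def using N3 by (auto simp: R0_iff)
  have D2c: "card D2 = N+1" unfolding D2_def using N3 by simp
  obtain S2 h where S2: "is_downset Q S2" "card S2 = N+1" "bij_betw h D2 S2"
    and h: "\<forall>p\<in>D2. \<forall>q\<in>D2. (p,q) \<in> R0 N \<longleftrightarrow> (h p, h q) \<in> snd Q"
    using realize[OF P0 eq D2d D2c] by auto
  define L where "L = g ` {..<N}"
  define W where "W = h ` {N..<2*N}"
  have S1sub: "S1 \<subseteq> fst Q" and S1cl: "\<And>y x. y \<in> S1 \<Longrightarrow> x \<in> fst Q \<Longrightarrow> (x,y) \<in> snd Q \<Longrightarrow> x \<in> S1"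
    using S1(1) unfolding is_downset_def by auto
  have S2sub: "S2 \<subseteq> fst Q" and S2cl: "\<And>y x. y \<in> S2 \<Longrightarrow> x \<in> fst Q \<Longrightarrow> (x,y) \<in> snd Q \<Longrightarrow> x \<in> S2"
    using S2(1) unfolding is_downset_def by auto
  have S1im: "S1 = g ` D1" using S1(3) by (simp add: bij_betw_def)
  have S2im: "S2 = h ` D2" using S2(3) by (simp add: bij_betw_def)
  have ginj: "inj_on g D1" using S1(3) by (simp add: bij_betw_def)
  have hinj: "inj_on h D2" using S2(3) by (simp add: bij_betw_def)
  have Lsub: "L \<subseteq> fst Q" using S1sub S1im unfolding L_def D1_def by auto
  have Wsub: "W \<subseteq> fst Q" using S2sub S2im unfolding W_def D2_def by auto
  have cardL: "card L = N" unfolding L_def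
    using card_image[OF inj_on_subset[OF ginj]] unfolding D1_def by auto
  have hinj2: "inj_on h {N..<2*N}" using hinj unfolding D2_def by (rule inj_on_subset) auto
  have cardW: "card W = N" unfolding W_def using card_image[OF hinj2] by simp
  have Ldown: "z \<in> L" if asm: "u \<in> L" "z \<in> fst Q" "(z,u) \<in> snd Q" for u z
  proof -
    obtain i where i: "i < N" "u = g i" using asm(1) unfolding L_def by auto
    have "u \<in> S1" using i S1im unfolding D1_def by auto
    then have "z \<in> S1" using S1cl asm by blast
    then obtain j where j: "j \<in> D1" "z = g j" using S1im by auto
    have "(j, i) \<in> R0 N" using g j i asm(3) unfolding D1_def by auto
    then have "j < N" using i by (simp add: R0_iff)
    then show ?thesis using j unfolding L_def by auto
  qed
  have Wdown: "z \<in> W" if asm: "u \<in> W" "z \<in> fst Q" "(z,u) \<in> snd Q" for u z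
  proof -
    obtain i where i: "N \<le> i" "i < 2*N" "u = h i" using asm(1) unfolding W_def by auto
    have "u \<in> S2" using i S2im unfolding D2_def by auto
    then have "z \<in> S2" using S2cl asm by blast
    then obtain j where j: "j \<in> D2" "z = h j" using S2im by auto
    have "(j, i) \<in> R0 N" using h j i asm(3) unfolding D2_def by auto
    then have "N \<le> j" "j < 2*N" using i by (auto simp: R0_iff)
    then show ?thesis using j unfolding W_def by auto
  qed
  have Lleast: "(g 0, u) \<in> snd Q" if asm: "u \<in> L" for u
  proof -
    obtain i where i: "i < N" "u = g i" using asm(1) unfolding L_def by auto
    have "(0, i) \<in> R0 N" using i N3 by (auto simp: R0_iff)
    then show ?thesis using g i unfolding D1_def by auto
  qed
  have Wleast: "(h N, u) \<in> snd Q" if asm: "u \<in> W" for u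
  proof -
    obtain i where i: "N \<le> i" "i < 2*N" "u = h i" using asm(1) unfolding W_def by auto
    have "(N, i) \<in> R0 N" using i N3 by (auto simp: R0_iff)
    then show ?thesis using h i N3 unfolding D2_def by auto
  qed
  have g0L: "g 0 \<in> L" using N3 unfolding L_def by auto
  have hNW: "h N \<in> W" using N3 unfolding W_def by auto
  have Lchain: "(u,v) \<in> snd Q \<or> (v,u) \<in> snd Q" if asm: "u \<in> L" "v \<in> L" for u v
  proof -
    obtain i where i: "i < N" "u = g i" using asm(1) unfolding L_def by auto
    obtain j where j: "j < N" "v = g j" using asm(2) unfolding L_def by auto
    have "(i, j) \<in> R0 N \<or> (j, i) \<in> R0 N" using i j N3 by (auto simp: R0_iff)
    then show ?thesis using g i j unfolding D1_def by auto
  qed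
  have Wa: "h (2*N-2) \<in> W" "h (2*N-1) \<in> W" using N3 unfolding W_def by auto
  have Wb: "(h (2*N-2), h (2*N-1)) \<notin> snd Q" "(h (2*N-1), h (2*N-2)) \<notin> snd Q"
  proof -
    have m: "2*N-2 \<in> D2" "2*N-1 \<in> D2" using N3 unfolding D2_def by auto
    have "(2*N-2, 2*N-1) \<notin> R0 N" "(2*N-1, 2*N-2) \<notin> R0 N" using N3 by (auto simp: R0_iff)
    then show "(h (2*N-2), h (2*N-1)) \<notin> snd Q" "(h (2*N-1), h (2*N-2)) \<notin> snd Q"
      using h m by auto
  qed
  have LW: "L \<noteq> W" using Lchain Wa Wb by metis
  have disj: "L \<inter> W = {}"
  proof (rule ccontr)
    assume "L \<inter> W \<noteq> {}"
    then obtain u where u: "u \<in> L" "u \<in> W" by auto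
    define l where "l = g 0"
    have lL: "l \<in> L" using g0L l_def by simp
    have lQ: "l \<in> fst Q" using lL Lsub by auto
    have "(l, u) \<in> snd Q" using Lleast u l_def by simp
    then have lW: "l \<in> W" using Wdown u lQ by blast
    have hQ: "h N \<in> fst Q" using hNW Wsub by auto
    have "(h N, l) \<in> snd Q" using Wleast lW by simp
    then have "h N \<in> L" using Ldown lL hQ by blast
    then have "(l, h N) \<in> snd Q" using Lleast l_def by simp
    then have hl: "h N = l" using antiQ \<open>(h N, l) \<in> snd Q\<close> by blast
    have finL: "finite L" using Lsub finQ finite_subset by blast
    have finW: "finite W" using Wsub finQ finite_subset by blast
    have "W - L \<noteq> {}"
    proof
      assume "W - L = {}"
      then have "W \<subseteq> L" by auto
      then have "W = L" using card_subset_eq[OF finL] cardL cardW by metis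
      then show False using LW by simp
    qed
    then obtain y0 where "y0 \<in> W - L" by auto
    define m where "m = (\<lambda>y. card {z \<in> fst Q. (z,y) \<in> snd Q})"
    obtain y where y: "y \<in> W - L" and ymin: "\<And>z. z \<in> W - L \<Longrightarrow> m y \<le> m z"
      using ex_has_least_nat[of "\<lambda>y. y \<in> W - L" y0 m] \<open>y0 \<in> W - L\<close> by blast
    have yQ: "y \<in> fst Q" using y Wsub by auto
    define T where "T = insert y L"
    have Td: "is_downset Q T"
      unfolding is_downset_def
    proof (intro conjI ballI impI)
      show "T \<subseteq> fst Q" using Lsub yQ unfolding T_def by auto
      fix t z assume t: "t \<in> T" and z: "z \<in> fst Q" and zt: "(z, t) \<in> snd Q"
      show "z \<in> T"
      proof (cases "t \<in> L")
        case True then show ?thesis using Ldown z zt unfolding T_def by blast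
      next
        case False
        then have ty: "t = y" using t unfolding T_def by auto
        have zW: "z \<in> W" using Wdown y z zt ty by blast
        show ?thesis
        proof (cases "z \<in> L")
          case True then show ?thesis unfolding T_def by simp
        next
          case False
          then have "m y \<le> m z" using ymin zW by blast
          moreover have "z = y"
          proof (rule ccontr)
            assume zy: "z \<noteq> y"
            have sub: "{x \<in> fst Q. (x,z) \<in> snd Q} \<subseteq> {x \<in> fst Q. (x,y) \<in> snd Q}"
              using transQ zt ty by blast
            have "y \<in> {x \<in> fst Q. (x,y) \<in> snd Q}" using reflQ yQ by blast
            moreover have "y \<notin> {x \<in> fst Q. (x,z) \<in> snd Q}" using antiQ zt ty zy by blast
            ultimately have "{x \<in> fst Q. (x,z) \<in> snd Q} \<subset> {x \<in> fst Q. (x,y) \<in> snd Q}"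
              using sub by blast
            then have "m z < m y" unfolding m_def using finQ by (simp add: psubset_card_mono)
            then show False using \<open>m y \<le> m z\<close> by simp
          qed
          ultimately show ?thesis unfolding T_def by simp
        qed
      qed
    qed
    have Tc: "card T = N+1" unfolding T_def using y finL cardL by simp
    obtain T0 f where T0: "is_downset (Q0 N) T0" "card T0 = N+1" "bij_betw f T T0"
      and f: "\<forall>p\<in>T. \<forall>q\<in>T. (p,q) \<in> snd Q \<longleftrightarrow> (f p, f q) \<in> R0 N"
      using realize[OF Q eq[symmetric] Td Tc] by auto
    have T0im: "T0 = f ` T" using T0(3) by (simp add: bij_betw_def)
    have lT: "l \<in> T" using lL unfolding T_def by simp
    have least0: "(f l, t) \<in> R0 N" if asm: "t \<in> T0" for t
    proof -
      obtain v where v: "v \<in> T" "t = f v" using asm T0im by auto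
      have "(l, v) \<in> snd Q"
      proof (cases "v \<in> L")
        case True then show ?thesis using Lleast l_def by simp
      next
        case False then have "v = y" using v unfolding T_def by simp
        then show ?thesis using Wleast y hl by auto
      qed
      then show ?thesis using f v lT by auto
    qed
    have T0sub: "T0 \<subseteq> {..<2*N}" using T0(1) unfolding is_downset_def by simp
    obtain p where p: "p \<in> T0" "N \<le> p"
    proof (rule ccontr)
      assume "\<not> thesis"
      then have "T0 \<subseteq> {..<N}" using that T0sub by force
      then have "card T0 \<le> N" using card_mono[of "{..<N}" T0] by simp
      then show False using T0(2) by simp
    qed
    obtain q where q: "q \<in> T0" "q < N"
    proof (rule ccontr)
      assume "\<not> thesis"
      then have "T0 \<subseteq> {N..<2*N}" using that T0sub by force
      then have "card T0 \<le> N" using card_mono[of "{N..<2*N}" T0] by simp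
      then show False using T0(2) by simp
    qed
    have "(f l, p) \<in> R0 N" "(f l, q) \<in> R0 N" using least0 p q by auto
    then show False using p q by (auto simp: R0_iff)
  qed
  have "card (L \<union> W) = 2*N"
    using disj cardL cardW Lsub Wsub finQ
    by (subst card_Un_disjoint) (auto intro: finite_subset)
  moreover have "card (L \<union> W) \<le> card (fst Q)"
    using Lsub Wsub finQ by (intro card_mono) auto
  ultimately show ?thesis by simp
qed

theorem mainTheorem3:
  fixes c :: real
  shows "\<exists>n \<Gamma>. covtree_node n \<Gamma> \<and>
           (\<forall>Q. is_witness n \<Gamma> Q \<longrightarrow> real (card (fst Q)) > real n + real (card \<Gamma>) + c)"
proof -
  define m where "m = nat \<lceil>c\<rceil>"
  define N where "N = 2*m + 6"
  have N3: "N \<ge> 3" unfolding N_def by simp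
  define \<Gamma> where "\<Gamma> = Dn (N+1) (Q0 N)"
  have P0: "is_poset (Q0 N)" using is_poset_Q0 N3 by simp
  have node: "covtree_node (N+1) \<Gamma>"
    unfolding covtree_node_def
  proof (intro conjI ballI exI)
    fix X assume "X \<in> \<Gamma>"
    then obtain S where S: "X = iso_class (restrict_poset (Q0 N) S)" "is_downset (Q0 N) S" "card S = N+1"
      unfolding \<Gamma>_def Dn_def by auto
    have "is_poset (restrict_poset (Q0 N) S)"
      using is_poset_restrict[OF P0] S(2) unfolding is_downset_def by blast
    then show "unlabelled_poset_of_size (N+1) X"
      unfolding unlabelled_poset_of_size_def using S by (intro exI[of _ "restrict_poset (Q0 N) S"]) simp
  next
    show "is_witness (N+1) \<Gamma> (Q0 N)" unfolding is_witness_def \<Gamma>_def using P0 by simp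
  qed
  have bound: "real (card (fst Q)) > real (N+1) + real (card \<Gamma>) + c" if "is_witness (N+1) \<Gamma> Q" for Q
  proof -
    have "is_poset Q" "Dn (N+1) Q = Dn (N+1) (Q0 N)" using that unfolding is_witness_def \<Gamma>_def by auto
    then have l: "2*N \<le> card (fst Q)" using lower[OF N3] by blast
    have k: "card \<Gamma> \<le> (N+1) div 2 + 1" unfolding \<Gamma>_def using card_Dn[OF N3] .
    have "(N+1) div 2 = m + 3" unfolding N_def by simp
    then have k2: "card \<Gamma> \<le> m + 4" using k by simp
    have mc: "c \<le> real m" unfolding m_def by linarith
    have "real (card \<Gamma>) \<le> real m + 4" using k2 by linarith
    moreover have "real (2*N) \<le> real (card (fst Q))" using l by linarith
    ultimately show ?thesis using mc unfolding N_def by simp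
  qed
  show ?thesis using node bound by blast
qed

end
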